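(* Let $q$ be a prime power, let $d \ge 1$ be a fixed integer, and let $f:\mathbb{F}_q^n \rightarrow \mathbb{F}_q$ be an unknown multilinear polynomial of degree $d$ over $\mathbb{F}_q$. Then any quantum query algorithm which learns $f$ with bounded error (i.e. outputs $f$ with probability at least a fixed constant, e.g. $2/3$, for every such $f$) must make $\Omega(n^{d-1})$ queries to $f$.
   Context: $\mathbb{F}_q$ denotes the finite field with $q$ elements. A function $f:\mathbb{F}_q^n \rightarrow \mathbb{F}_q$ is a multilinear polynomial of degree $d$ if it can be written as $f(x) = \sum_{S \subseteq [n],|S|\le d} \alpha_S \prod_{i \in S} x_i$ for some coefficients $\alpha_S \in \mathbb{F}_q$, where $[n]=\{1,\dots,n\}$ and the empty product equals $1$. In the quantum query model, the algorithm accesses $f$ only via the unitary oracle $O_f \ket{x}\ket{y} = \ket{x}\ket{y + f(x)}$ for $x \in \mathbb{F}_q^n$, $y \in \mathbb{F}_q$ (interleaved with arbitrary oracle-independent unitaries and a final measurement); the number of queries is the number of applications of $O_f$. To learn $f$ means to output (a description of) $f$, i.e. all its coefficients $\alpha_S$. *)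

theory Defs
  imports Complex_Main
begin

(* Finite field F_q: a type 'a of class {finite, field}; q = CARD('a).
  Vectors in F_q^n: functions nat \<Rightarrow> 'a vanishing outside {0..<n}. *)

definition vecs :: "nat \<Rightarrow> (nat \<Rightarrow> 'a::zero) set" where
  "vecs n = {x. \<forall>i\<ge>n. x i = 0}"

definition ml_sets :: "nat \<Rightarrow> nat \<Rightarrow> nat set set" where
  "ml_sets n d = {S. S \<subseteq> {..<n} \<and> card S \<le> d}"

definition ml_coeffs :: "nat \<Rightarrow> nat \<Rightarrow> (nat set \<Rightarrow> 'a::zero) set" where
  "ml_coeffs n d = {\<alpha>. \<forall>S. S \<notin> ml_sets n d \<longrightarrow> \<alpha> S = 0}"

definition ml_eval :: "nat \<Rightarrow> nat \<Rightarrow> (nat set \<Rightarrow> 'a::comm_ring_1) \<Rightarrow> (nat \<Rightarrow> 'a) \<Rightarrow> 'a" where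
  "ml_eval n d \<alpha> x = (\<Sum>S\<in>ml_sets n d. \<alpha> S * (\<Prod>i\<in>S. x i))"

(* Computational basis: |x, y, w> with x \<in> F_q^n (query register), y \<in> F_q (answer
  register), w < m (workspace of arbitrary finite dimension m). *)
type_synonym 'a qbasis = "(nat \<Rightarrow> 'a) \<times> 'a \<times> nat"
type_synonym 'a qstate = "'a qbasis \<Rightarrow> complex"
type_synonym 'a qmat = "'a qbasis \<Rightarrow> 'a qbasis \<Rightarrow> complex"

definition qbasis :: "nat \<Rightarrow> nat \<Rightarrow> ('a::zero) qbasis set" where
  "qbasis n m = {(x, y, w). x \<in> vecs n \<and> w < m}"

definition apply_mat :: "('a::zero) qbasis set \<Rightarrow> 'a qmat \<Rightarrow> 'a qstate \<Rightarrow> 'a qstate" where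
  "apply_mat B U v = (\<lambda>b. \<Sum>b'\<in>B. U b b' * v b')"

definition unitary_on :: "('a::zero) qbasis set \<Rightarrow> 'a qmat \<Rightarrow> bool" where
  "unitary_on B U \<longleftrightarrow> (\<forall>b1\<in>B. \<forall>b2\<in>B.
      (\<Sum>b\<in>B. cnj (U b b1) * U b b2) = (if b1 = b2 then 1 else 0))"

(* Query operator O_f |x,y,w> = |x, y + f x, w>, acting on amplitude functions. *)
definition query_op :: "((nat \<Rightarrow> 'a) \<Rightarrow> 'a) \<Rightarrow> ('a::ab_group_add) qstate \<Rightarrow> 'a qstate" where
  "query_op f v = (\<lambda>(x, y, w). v (x, y - f x, w))"

definition init_state :: "('a::zero) qstate" where
  "init_state = (\<lambda>b. if b = ((\<lambda>_. 0), 0, 0) then 1 else 0)"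

fun run_alg :: "('a::ab_group_add) qbasis set \<Rightarrow> (nat \<Rightarrow> 'a qmat) \<Rightarrow> ((nat \<Rightarrow> 'a) \<Rightarrow> 'a)
                 \<Rightarrow> nat \<Rightarrow> 'a qstate" where
  "run_alg B U f 0 = apply_mat B (U 0) init_state"
| "run_alg B U f (Suc k) = apply_mat B (U (Suc k)) (query_op f (run_alg B U f k))"

definition out_prob :: "('a::ab_group_add) qbasis set \<Rightarrow> (nat \<Rightarrow> 'a qmat) \<Rightarrow> nat
     \<Rightarrow> ('a qbasis \<Rightarrow> 'r) \<Rightarrow> ((nat \<Rightarrow> 'a) \<Rightarrow> 'a) \<Rightarrow> 'r \<Rightarrow> real" where
  "out_prob B U T out f r = (\<Sum>b\<in>{b\<in>B. out b = r}. (cmod (run_alg B U f T b))\<^sup>2)"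

definition learns :: "nat \<Rightarrow> nat \<Rightarrow> nat \<Rightarrow> nat \<Rightarrow> (nat \<Rightarrow> ('a::{finite,field}) qmat)
                      \<Rightarrow> ('a qbasis \<Rightarrow> (nat set \<Rightarrow> 'a)) \<Rightarrow> bool" where
  "learns n d m T U out \<longleftrightarrow> m \<ge> 1 \<and> (\<forall>k\<le>T. unitary_on (qbasis n m) (U k)) \<and>
     (\<forall>\<alpha>\<in>ml_coeffs n d. out_prob (qbasis n m) U T out (ml_eval n d \<alpha>) \<alpha> \<ge> 2/3)"

end

theory Submission imports Defs "HOL-Library.FuncSet" "HOL-Analysis.Convex" begin

definition PS :: "(nat \<Rightarrow> 'a) \<Rightarrow> 'a \<Rightarrow> ('a::ab_group_add) qstate \<Rightarrow> 'a qstate" where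
  "PS x a v = (\<lambda>(x', y, w). if x' = x then v (x', y - a, w) else 0)"

fun Wv :: "('a::ab_group_add) qbasis set \<Rightarrow> (nat \<Rightarrow> 'a qmat) \<Rightarrow> ((nat \<Rightarrow> 'a) \<times> 'a) list \<Rightarrow> 'a qstate" where
  "Wv B U [] = apply_mat B (U 0) init_state"
| "Wv B U ((x,a)#ks) = apply_mat B (U (Suc (length ks))) (PS x a (Wv B U ks))"

lemma finite_vecs: "finite (vecs n :: (nat \<Rightarrow> 'a::{finite,zero}) set)"
proof -
  have "inj_on (\<lambda>x. restrict x {..<n}) (vecs n :: (nat \<Rightarrow> 'a) set)"
    by (auto simp: inj_on_def vecs_def restrict_def fun_eq_iff) (metis not_less)
  moreover have "(\<lambda>x. restrict x {..<n}) ` (vecs n :: (nat \<Rightarrow> 'a) set) \<subseteq> PiE {..<n} (\<lambda>_. UNIV)"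
    by (auto simp: PiE_iff extensional_def split: if_splits)
  ultimately show ?thesis using finite_PiE[of "{..<n}" "\<lambda>_. UNIV :: 'a set"]
    by (metis finite_imageD finite_lessThan finite subset_eq finite_subset)
qed

lemma card_vecs: "card (vecs n :: (nat \<Rightarrow> 'a::{finite,zero}) set) \<le> card (UNIV :: 'a set) ^ n"
proof -
  have "inj_on (\<lambda>x. restrict x {..<n}) (vecs n :: (nat \<Rightarrow> 'a) set)"
    by (auto simp: inj_on_def vecs_def restrict_def fun_eq_iff) (metis not_less)
  moreover have "(\<lambda>x. restrict x {..<n}) ` (vecs n :: (nat \<Rightarrow> 'a) set) \<subseteq> PiE {..<n} (\<lambda>_. UNIV)"
    by (auto simp: PiE_iff extensional_def split: if_splits)
  ultimately have "card (vecs n :: (nat \<Rightarrow> 'a) set) \<le> card (PiE {..<n} (\<lambda>_. UNIV :: 'a set))"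
    by (intro card_inj_on_le) (auto intro: finite_PiE)
  thus ?thesis by (simp add: card_PiE)
qed

lemma finite_qbasis: "finite (qbasis n m :: ('a::{finite,zero}) qbasis set)"
proof -
  have "qbasis n m \<subseteq> vecs n \<times> (UNIV :: 'a set) \<times> {..<m}" by (auto simp: qbasis_def)
  thus ?thesis using finite_vecs by (metis finite_SigmaI finite_UNIV finite_lessThan finite_subset)
qed

lemma cms: "complex_of_real ((cmod z)\<^sup>2) = z * cnj z"
  by (rule complex_norm_square)

definition nrm :: "('a::zero) qbasis set \<Rightarrow> 'a qstate \<Rightarrow> real" where
  "nrm B v = (\<Sum>b\<in>B. (cmod (v b))\<^sup>2)"

lemma of_nrm: "complex_of_real (nrm B v) = (\<Sum>b\<in>B. v b * cnj (v b))"
  unfolding nrm_def of_real_sum by (simp only: cms)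

lemma nrm_unitary:
  assumes fin: "finite B" and U: "unitary_on B U"
  shows "nrm B (apply_mat B U v) = nrm B v"
proof -
  have "complex_of_real (nrm B (apply_mat B U v))
      = (\<Sum>b\<in>B. (\<Sum>b1\<in>B. U b b1 * v b1) * cnj (\<Sum>b2\<in>B. U b b2 * v b2))"
    by (simp only: of_nrm apply_mat_def)
  also have "\<dots> = (\<Sum>b\<in>B. \<Sum>b2\<in>B. \<Sum>b1\<in>B. v b1 * cnj (v b2) * (cnj (U b b2) * U b b1))"
    by (simp add: sum_distrib_left sum_distrib_right mult_ac)
  also have "\<dots> = (\<Sum>b2\<in>B. \<Sum>b\<in>B. \<Sum>b1\<in>B. v b1 * cnj (v b2) * (cnj (U b b2) * U b b1))"
    by (rule sum.swap)
  also have "\<dots> = (\<Sum>b2\<in>B. \<Sum>b1\<in>B. \<Sum>b\<in>B. v b1 * cnj (v b2) * (cnj (U b b2) * U b b1))"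
    by (intro sum.cong refl sum.swap)
  also have "\<dots> = (\<Sum>b2\<in>B. \<Sum>b1\<in>B. v b1 * cnj (v b2) * (\<Sum>b\<in>B. cnj (U b b2) * U b b1))"
    by (simp add: sum_distrib_left)
  also have "\<dots> = (\<Sum>b2\<in>B. \<Sum>b1\<in>B. v b1 * cnj (v b2) * (if b2 = b1 then 1 else 0))"
    using U unfolding unitary_on_def by (intro sum.cong refl) simp
  also have "\<dots> = (\<Sum>b1\<in>B. v b1 * cnj (v b1))"
    using fin by (simp add: if_distrib cong: if_cong)
  also have "\<dots> = complex_of_real (nrm B v)"
    by (simp only: of_nrm)
  finally show ?thesis by (simp only: of_real_eq_iff)
qed

lemma nrm_PS: "nrm (qbasis n m) (PS x a v) \<le> nrm (qbasis n m) (v :: ('a::{finite,ab_group_add}) qstate)"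
proof -
  let ?B = "qbasis n m :: 'a qbasis set"
  define \<sigma> where "\<sigma> = (\<lambda>(x'::nat\<Rightarrow>'a, y::'a, w::nat). (x', y - a, w))"
  have inj: "inj \<sigma>" unfolding \<sigma>_def by (auto simp: inj_on_def)
  have img: "\<sigma> ` ?B = ?B"
  proof
    show "\<sigma> ` ?B \<subseteq> ?B" unfolding \<sigma>_def qbasis_def by auto
    show "?B \<subseteq> \<sigma> ` ?B"
    proof
      fix b assume "b \<in> ?B"
      then obtain x' y w where b: "b = (x', y, w)" "x' \<in> vecs n" "w < m" by (auto simp: qbasis_def)
      hence "(x', y + a, w) \<in> ?B" "b = \<sigma> (x', y + a, w)" by (auto simp: qbasis_def \<sigma>_def)
      thus "b \<in> \<sigma> ` ?B" by blast
    qed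
  qed
  have "nrm ?B (PS x a v) \<le> (\<Sum>b\<in>?B. (cmod (v (\<sigma> b)))\<^sup>2)"
    unfolding nrm_def
  proof (rule sum_mono)
    fix b :: "'a qbasis" obtain x' y w where "b = (x', y, w)" by (cases b) auto
    thus "(cmod (PS x a v b))\<^sup>2 \<le> (cmod (v (\<sigma> b)))\<^sup>2" by (simp add: PS_def \<sigma>_def)
  qed
  also have "\<dots> = (\<Sum>b\<in>\<sigma> ` ?B. (cmod (v b))\<^sup>2)"
    using inj by (simp add: sum.reindex inj_on_subset[OF inj])
  also have "\<dots> = nrm ?B v" by (simp add: img nrm_def)
  finally show ?thesis .
qed

lemma nrm_init: "nrm B (init_state :: ('a::zero) qstate) \<le> 1"
proof -
  have "nrm B (init_state :: 'a qstate) = (\<Sum>b\<in>B. if b = ((\<lambda>_. 0), 0, 0) then 1 else 0)"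
    unfolding nrm_def init_state_def by (intro sum.cong) auto
  also have "\<dots> \<le> 1" by (cases "finite B") (auto simp: sum.delta')
  finally show ?thesis .
qed

lemma nrm_Wv:
  assumes "length ks \<le> T" "\<forall>k\<le>T. unitary_on (qbasis n m) (U k)"
  shows "nrm (qbasis n m) (Wv (qbasis n m) U ks :: ('a::{finite,ab_group_add}) qstate) \<le> 1"
  using assms(1)
proof (induction ks)
  case Nil
  thus ?case using assms(2) nrm_init by (simp add: nrm_unitary finite_qbasis)
next
  case (Cons p ks)
  obtain x a where p: "p = (x, a)" by (cases p)
  have "unitary_on (qbasis n m) (U (Suc (length ks)))" using Cons.prems assms(2) by simp
  hence "nrm (qbasis n m) (Wv (qbasis n m) U (p # ks)) = nrm (qbasis n m) (PS x a (Wv (qbasis n m) U ks))"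
    by (simp add: p nrm_unitary finite_qbasis)
  also have "\<dots> \<le> nrm (qbasis n m) (Wv (qbasis n m) U ks)" by (rule nrm_PS)
  also have "\<dots> \<le> 1" using Cons by simp
  finally show ?case .
qed

definition Ls :: "nat \<Rightarrow> nat \<Rightarrow> (nat \<Rightarrow> 'a::zero) list set" where
  "Ls n t = {xs. set xs \<subseteq> vecs n \<and> length xs = t}"

lemma decomp:
  fixes f :: "(nat \<Rightarrow> 'a::{finite,ab_group_add}) \<Rightarrow> 'a"
  assumes "b \<in> qbasis n m"
  shows "run_alg (qbasis n m) U f t b = (\<Sum>xs\<in>Ls n t. Wv (qbasis n m) U (zip xs (map f xs)) b)"
  using assms
proof (induction t arbitrary: b)
  case 0
  have "Ls n 0 = ({[]} :: (nat \<Rightarrow> 'a) list set)" by (auto simp: Ls_def)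
  thus ?case by simp
next
  case (Suc t)
  let ?B = "qbasis n m :: 'a qbasis set"
  let ?X = "vecs n :: (nat \<Rightarrow> 'a) set"
  let ?W = "\<lambda>xs. Wv ?B U (zip xs (map f xs))"
  have LS: "Ls n (Suc t) = (\<lambda>(xs, x). x#xs) ` (Ls n t \<times> ?X)"
    unfolding Ls_def by (rule lists_length_Suc_eq)
  have "(\<Sum>xs\<in>Ls n (Suc t). ?W xs b) = (\<Sum>(xs,x)\<in>Ls n t \<times> ?X. ?W (x#xs) b)"
    unfolding LS by (subst sum.reindex) (auto simp: inj_split_Cons intro!: sum.cong)
  also have "\<dots> = (\<Sum>(xs,x)\<in>Ls n t \<times> ?X. \<Sum>b'\<in>?B. U (Suc t) b b' * PS x (f x) (?W xs) b')"
    by (intro sum.cong refl) (auto simp: Ls_def apply_mat_def)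
  also have "\<dots> = (\<Sum>xs\<in>Ls n t. \<Sum>x\<in>?X. \<Sum>b'\<in>?B. U (Suc t) b b' * PS x (f x) (?W xs) b')"
    by (rule sum.cartesian_product[symmetric])
  also have "\<dots> = (\<Sum>b'\<in>?B. U (Suc t) b b' * (\<Sum>xs\<in>Ls n t. \<Sum>x\<in>?X. PS x (f x) (?W xs) b'))"
    by (simp add: sum_distrib_left sum.swap[of _ ?B])
  also have "\<dots> = (\<Sum>b'\<in>?B. U (Suc t) b b' * query_op f (run_alg ?B U f t) b')"
  proof (intro sum.cong refl arg_cong2[where f = "(*)"])
    fix b' assume b': "b' \<in> ?B"
    then obtain x'' y'' w'' where bb: "b' = (x'', y'', w'')" "x'' \<in> ?X" "w'' < m"
      by (auto simp: qbasis_def)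
    have finX: "finite ?X" by (rule finite_vecs)
    have inB: "(x'', y'' - f x'', w'') \<in> ?B" using bb by (simp add: qbasis_def)
    have "(\<Sum>xs\<in>Ls n t. \<Sum>x\<in>?X. PS x (f x) (?W xs) b') = (\<Sum>xs\<in>Ls n t. ?W xs (x'', y'' - f x'', w''))"
      using bb finX by (intro sum.cong refl) (simp add: PS_def sum.delta sum.delta')
    also have "\<dots> = run_alg ?B U f t (x'', y'' - f x'', w'')" using Suc.IH[OF inB] by simp
    also have "\<dots> = query_op f (run_alg ?B U f t) b'" by (simp add: bb query_op_def)
    finally show "(\<Sum>xs\<in>Ls n t. \<Sum>x\<in>?X. PS x (f x) (?W xs) b') = query_op f (run_alg ?B U f t) b'" .
  qed
  also have "\<dots> = run_alg ?B U f (Suc t) b" by (simp add: apply_mat_def)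
  finally show ?case by simp
qed

definition Ks :: "nat \<Rightarrow> nat \<Rightarrow> ((nat \<Rightarrow> 'a::zero) \<times> 'a) list set" where
  "Ks n t = {ks. set ks \<subseteq> vecs n \<times> UNIV \<and> length ks = t}"

lemma pointwise:
  fixes f :: "(nat \<Rightarrow> 'a::{finite,ab_group_add}) \<Rightarrow> 'a"
  assumes b: "b \<in> qbasis n m"
  shows "(cmod (run_alg (qbasis n m) U f T b))\<^sup>2
     \<le> real (card (Ls n T :: (nat \<Rightarrow> 'a) list set)) * (\<Sum>ks\<in>Ks n T. (cmod (Wv (qbasis n m) U ks b))\<^sup>2)"
proof -
  let ?B = "qbasis n m :: 'a qbasis set"
  let ?L = "Ls n T :: (nat \<Rightarrow> 'a) list set"
  let ?h = "\<lambda>xs. zip xs (map f xs)"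
  have finL: "finite ?L" unfolding Ls_def by (rule finite_lists_length_eq[OF finite_vecs])
  have finK: "finite (Ks n T :: ((nat \<Rightarrow> 'a) \<times> 'a) list set)"
    unfolding Ks_def by (rule finite_lists_length_eq) (simp add: finite_vecs)
  have "cmod (run_alg ?B U f T b) \<le> (\<Sum>xs\<in>?L. cmod (Wv ?B U (?h xs) b))"
    unfolding decomp[OF b] by (rule norm_sum)
  hence "(cmod (run_alg ?B U f T b))\<^sup>2 \<le> (\<Sum>xs\<in>?L. cmod (Wv ?B U (?h xs) b))\<^sup>2"
    by (simp add: power_mono)
  also have "\<dots> \<le> (\<Sum>xs\<in>?L. (cmod (Wv ?B U (?h xs) b))\<^sup>2) * card ?L"
    by (rule sum_squared_le_sum_of_squares)
  moreover have S1: "(\<Sum>xs\<in>?L. (cmod (Wv ?B U (?h xs) b))\<^sup>2) = (\<Sum>ks\<in>?h ` ?L. (cmod (Wv ?B U ks b))\<^sup>2)"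
  proof -
    have "inj_on ?h ?L" by (rule inj_onI) (metis map_fst_zip length_map)
    thus ?thesis by (simp add: sum.reindex)
  qed
  moreover have S2: "(\<Sum>ks\<in>?h ` ?L. (cmod (Wv ?B U ks b))\<^sup>2) \<le> (\<Sum>ks\<in>Ks n T. (cmod (Wv ?B U ks b))\<^sup>2)"
    by (rule sum_mono2[OF finK]) (auto simp: Ls_def Ks_def set_zip_leftD)
  ultimately show ?thesis
    by (smt (verit, best) mult.commute mult_left_mono of_nat_0_le_iff)
qed

lemma card_coeffs:
  "card (UNIV :: ('a::{finite,zero}) set) ^ card (ml_sets n d) \<le> card (ml_coeffs n d :: (nat set \<Rightarrow> 'a) set)"
proof -
  let ?A = "ml_sets n d"
  let ?\<phi> = "\<lambda>g S. if S \<in> ?A then g S else (0::'a)"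
  have finA: "finite ?A"
    by (rule finite_subset[of _ "Pow {..<n}"]) (auto simp: ml_sets_def)
  have eq: "ml_coeffs n d = ?\<phi> ` PiE ?A (\<lambda>_. UNIV)"
  proof
    show "ml_coeffs n d \<subseteq> ?\<phi> ` PiE ?A (\<lambda>_. UNIV)"
    proof
      fix \<alpha> :: "nat set \<Rightarrow> 'a" assume a: "\<alpha> \<in> ml_coeffs n d"
      have "\<alpha> = ?\<phi> (restrict \<alpha> ?A)"
      proof
        fix S show "\<alpha> S = ?\<phi> (restrict \<alpha> ?A) S"
          using a unfolding ml_coeffs_def by (cases "S \<in> ?A") simp_all
      qed
      moreover have "restrict \<alpha> ?A \<in> PiE ?A (\<lambda>_. UNIV)" by simp
      ultimately show "\<alpha> \<in> ?\<phi> ` PiE ?A (\<lambda>_. UNIV)" by blast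
    qed
    show "?\<phi> ` PiE ?A (\<lambda>_. UNIV) \<subseteq> ml_coeffs n d" by (rule image_subsetI) (simp add: ml_coeffs_def)
  qed
  have inj: "inj_on ?\<phi> (PiE ?A (\<lambda>_. UNIV))"
  proof (rule inj_onI)
    fix g h assume g: "g \<in> PiE ?A (\<lambda>_. UNIV)" and h: "h \<in> PiE ?A (\<lambda>_. UNIV)" and e: "?\<phi> g = ?\<phi> h"
    show "g = h"
    proof
      fix S show "g S = h S"
      proof (cases "S \<in> ?A")
        case True thus ?thesis using fun_cong[OF e, of S] by simp
      next
        case False
        have "g S = undefined" by (rule PiE_arb[OF g False])
        moreover have "h S = undefined" by (rule PiE_arb[OF h False])
        ultimately show ?thesis by (rule trans[OF _ sym])
      qed
    qed
  qed
  have "card (ml_coeffs n d :: (nat set \<Rightarrow> 'a) set) = card (PiE ?A (\<lambda>_. UNIV :: 'a set))"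
    unfolding eq by (rule card_image[OF inj])
  also have "\<dots> = card (UNIV :: 'a set) ^ card ?A" using finA by (simp add: card_PiE)
  finally show ?thesis by simp
qed

lemma finite_coeffs: "finite (ml_coeffs n d :: (nat set \<Rightarrow> 'a::{finite,zero}) set)"
proof -
  have "card (UNIV :: 'a set) > 0" by (simp add: card_gt_0_iff)
  hence "card (UNIV :: 'a set) ^ card (ml_sets n d) \<ge> 1" by (simp add: Suc_le_eq)
  thus ?thesis using card_coeffs[where 'a='a, of n d] by (metis card.infinite not_one_le_zero order_trans)
qed

lemma main_bound:
  assumes L: "learns n d m T U (out :: ('a::{finite,field}) qbasis \<Rightarrow> _)"
  shows "2/3 * real (card (ml_coeffs n d :: (nat set \<Rightarrow> 'a) set))
           \<le> real (card (Ls n T :: (nat \<Rightarrow> 'a) list set)) * real (card (Ks n T :: ((nat \<Rightarrow> 'a) \<times> 'a) list set))"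
proof -
  let ?B = "qbasis n m :: 'a qbasis set"
  let ?C = "ml_coeffs n d :: (nat set \<Rightarrow> 'a) set"
  let ?K = "Ks n T :: ((nat \<Rightarrow> 'a) \<times> 'a) list set"
  let ?cL = "real (card (Ls n T :: (nat \<Rightarrow> 'a) list set))"
  define G where "G b = ?cL * (\<Sum>ks\<in>?K. (cmod (Wv ?B U ks b))\<^sup>2)" for b
  have finB: "finite ?B" by (rule finite_qbasis)
  have finK: "finite ?K"
    unfolding Ks_def by (rule finite_lists_length_eq) (simp add: finite_vecs)
  have G0: "G b \<ge> 0" for b unfolding G_def by (intro mult_nonneg_nonneg sum_nonneg) auto
  have finA: "finite (ml_sets n d)"
    by (rule finite_subset[of _ "Pow {..<n}"]) (auto simp: ml_sets_def)
  have finC: "finite ?C" by (rule finite_coeffs)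
  have "2/3 * real (card ?C) = (\<Sum>\<alpha>\<in>?C. 2/3)" by simp
  also have "\<dots> \<le> (\<Sum>\<alpha>\<in>?C. out_prob ?B U T out (ml_eval n d \<alpha>) \<alpha>)"
    using L unfolding learns_def by (intro sum_mono) blast
  also have "\<dots> \<le> (\<Sum>\<alpha>\<in>?C. \<Sum>b\<in>{b\<in>?B. out b = \<alpha>}. G b)"
  proof (rule sum_mono)
    fix \<alpha> assume "\<alpha> \<in> ?C"
    show "out_prob ?B U T out (ml_eval n d \<alpha>) \<alpha> \<le> (\<Sum>b\<in>{b\<in>?B. out b = \<alpha>}. G b)"
      unfolding out_prob_def
    proof (rule sum_mono)
      fix b assume "b \<in> {b\<in>?B. out b = \<alpha>}"
      hence "b \<in> ?B" by simp
      thus "(cmod (run_alg ?B U (ml_eval n d \<alpha>) T b))\<^sup>2 \<le> G b"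
        unfolding G_def by (rule pointwise)
    qed
  qed
  also have "\<dots> = (\<Sum>\<alpha>\<in>?C. \<Sum>b\<in>?B. if out b = \<alpha> then G b else 0)"
    using finB by (simp add: sum.inter_filter)
  also have "\<dots> = (\<Sum>b\<in>?B. \<Sum>\<alpha>\<in>?C. if out b = \<alpha> then G b else 0)"
    by (rule sum.swap)
  also have "\<dots> = (\<Sum>b\<in>?B. if out b \<in> ?C then G b else 0)"
    using finC by (simp add: sum.delta)
  also have "\<dots> \<le> (\<Sum>b\<in>?B. G b)"
    using G0 by (intro sum_mono) auto
  also have "\<dots> = ?cL * (\<Sum>ks\<in>?K. nrm ?B (Wv ?B U ks))"
  proof -
    have "(\<Sum>b\<in>?B. G b) = ?cL * (\<Sum>b\<in>?B. \<Sum>ks\<in>?K. (cmod (Wv ?B U ks b))\<^sup>2)"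
      unfolding G_def by (rule sum_distrib_left[symmetric])
    also have "(\<Sum>b\<in>?B. \<Sum>ks\<in>?K. (cmod (Wv ?B U ks b))\<^sup>2) = (\<Sum>ks\<in>?K. \<Sum>b\<in>?B. (cmod (Wv ?B U ks b))\<^sup>2)"
      by (rule sum.swap)
    finally show ?thesis unfolding nrm_def .
  qed
  also have "\<dots> \<le> ?cL * (\<Sum>ks\<in>?K. 1)"
  proof (intro mult_left_mono sum_mono)
    fix ks assume "ks \<in> ?K"
    thus "nrm ?B (Wv ?B U ks) \<le> 1"
      using L by (intro nrm_Wv[where T = T]) (auto simp: Ks_def learns_def)
  qed simp
  also have "\<dots> = ?cL * real (card ?K)" by simp
  finally show ?thesis .
qed

lemma card_Ls: "card (Ls n T :: (nat \<Rightarrow> 'a::{finite,zero}) list set) \<le> card (UNIV :: 'a set) ^ (n * T)"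
proof -
  have "card (Ls n T :: (nat \<Rightarrow> 'a) list set) = card (vecs n :: (nat \<Rightarrow> 'a) set) ^ T"
    unfolding Ls_def by (rule card_lists_length_eq[OF finite_vecs])
  also have "\<dots> \<le> (card (UNIV :: 'a set) ^ n) ^ T" by (intro power_mono card_vecs) auto
  finally show ?thesis by (simp add: power_mult)
qed

lemma card_Ks: "card (Ks n T :: ((nat \<Rightarrow> 'a::{finite,zero}) \<times> 'a) list set) \<le> card (UNIV :: 'a set) ^ ((n + 1) * T)"
proof -
  have "card (Ks n T :: ((nat \<Rightarrow> 'a) \<times> 'a) list set) = card ((vecs n :: (nat \<Rightarrow> 'a) set) \<times> (UNIV :: 'a set)) ^ T"
  proof -
    have fin: "finite (vecs n \<times> (UNIV :: 'a set) :: ((nat \<Rightarrow> 'a) \<times> 'a) set)" by (intro finite_cartesian_product finite_vecs finite_UNIV)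
    show ?thesis unfolding Ks_def by (rule card_lists_length_eq[OF fin])
  qed
  also have "\<dots> = (card (vecs n :: (nat \<Rightarrow> 'a) set) * card (UNIV :: 'a set)) ^ T" by (simp only: card_cartesian_product)
  also have "\<dots> \<le> (card (UNIV :: 'a set) ^ n * card (UNIV :: 'a set)) ^ T" by (intro power_mono mult_right_mono card_vecs) auto
  also have "\<dots> = (card (UNIV :: 'a set) ^ (n + 1)) ^ T" by (simp add: mult.commute)
  also have "\<dots> = card (UNIV :: 'a set) ^ ((n + 1) * T)" by (rule power_mult[symmetric])
  finally show ?thesis .
qed

lemma exp_bound:
  assumes L: "learns n d m T U (out :: ('a::{finite,field}) qbasis \<Rightarrow> _)"
  shows "card (ml_sets n d) \<le> (2 * n + 1) * T"
proof (rule ccontr)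
  let ?q = "card (UNIV :: 'a set)"
  let ?N = "card (ml_sets n d)"
  assume "\<not> ?thesis"
  hence N: "(2 * n + 1) * T + 1 \<le> ?N" by simp
  have q2: "?q \<ge> 2"
  proof -
    have "{0, 1} \<subseteq> (UNIV :: 'a set)" by simp
    hence "card {0, 1::'a} \<le> ?q" by (intro card_mono) auto
    thus ?thesis by simp
  qed
  have "2/3 * real (?q ^ ?N) \<le> 2/3 * real (card (ml_coeffs n d :: (nat set \<Rightarrow> 'a) set))"
    using card_coeffs[where 'a='a, of n d] by simp
  also have "\<dots> \<le> real (card (Ls n T :: (nat \<Rightarrow> 'a) list set)) * real (card (Ks n T :: ((nat \<Rightarrow> 'a) \<times> 'a) list set))"
    by (rule main_bound[OF L])
  also have "\<dots> \<le> real (?q ^ (n * T)) * real (?q ^ ((n + 1) * T))"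
    using card_Ls[where 'a='a, of n T] card_Ks[where 'a='a, of n T]
    by (intro mult_mono) auto
  also have "\<dots> = real (?q ^ ((2 * n + 1) * T))"
  proof -
    have e: "n * T + (n + 1) * T = (2 * n + 1) * T" by (simp add: algebra_simps)
    show ?thesis by (simp only: e power_add[symmetric] of_nat_mult[symmetric])
  qed
  finally have A: "2/3 * real (?q ^ ?N) \<le> real (?q ^ ((2 * n + 1) * T))" .
  have "?q ^ ((2 * n + 1) * T + 1) \<le> ?q ^ ?N" using N q2 by (intro power_increasing) auto
  hence "?q * ?q ^ ((2 * n + 1) * T) \<le> ?q ^ ?N" by simp
  hence "real (?q * ?q ^ ((2 * n + 1) * T)) \<le> real (?q ^ ?N)" by (simp only: of_nat_le_iff)
  moreover have "2 * real (?q ^ ((2 * n + 1) * T)) \<le> real (?q * ?q ^ ((2 * n + 1) * T))"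
    using q2 by (simp add: mult_right_mono)
  moreover have "real (?q ^ ((2 * n + 1) * T)) > 0" using q2 by simp
  ultimately show False using A by linarith
qed

theorem proposition1:
  fixes d :: nat
  assumes "d \<ge> 1"
  shows "\<exists>c::real > 0. \<exists>N::nat. \<forall>n\<ge>N. \<forall>m T (U :: nat \<Rightarrow> ('a::{finite,field}) qmat) out.
           learns n d m T U out \<longrightarrow> real T \<ge> c * real n ^ (d - 1)"
proof (intro exI[of _ "1 / (3 * real d ^ d)"] conjI exI[of _ d] allI impI)
  show "0 < 1 / (3 * real d ^ d)" using assms by simp
  fix n m T and U :: "nat \<Rightarrow> 'a qmat" and out
  assume nd: "d \<le> n" and L: "learns n d m T U out"
  have n1: "n \<ge> 1" using nd assms by simp
  have "(n choose d) = card {S. S \<subseteq> {..<n} \<and> card S = d}" by (simp add: n_subsets)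
  also have "\<dots> \<le> card (ml_sets n d)"
    by (rule card_mono) (auto simp: ml_sets_def intro: finite_subset[of _ "Pow {..<n}"])
  also have "\<dots> \<le> (2 * n + 1) * T" by (rule exp_bound[OF L])
  finally have c1: "real (n choose d) \<le> real ((2 * n + 1) * T)" by (simp only: of_nat_le_iff)
  have "(real n / real d) ^ d \<le> real (n choose d)" by (rule binomial_ge_n_over_k_pow_k[OF nd])
  also have "\<dots> \<le> (2 * real n + 1) * real T" using c1 by (simp add: algebra_simps)
  also have "\<dots> \<le> 3 * real n * real T" using n1 by (intro mult_right_mono) auto
  finally have "real n ^ d / real d ^ d \<le> 3 * real n * real T" by (simp add: power_divide)
  moreover have "real n ^ d = real n * real n ^ (d - 1)"
    using assms by (cases d) simp_all
  ultimately have "real n * (real n ^ (d - 1) / real d ^ d) \<le> real n * (3 * real T)" by simp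
  hence "real n ^ (d - 1) / real d ^ d \<le> 3 * real T" using n1 mult_le_cancel_left_pos[of "real n" "real n ^ (d - 1) / real d ^ d" "3 * real T"] by simp
  thus "1 / (3 * real d ^ d) * real n ^ (d - 1) \<le> real T" using assms by (simp add: field_simps)
qed

end
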